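(* Let $X$ be an infinite-dimensional separable (real or complex) Banach space and let $A$ be an operator in $X$ satisfying all hypotheses of Theorem 2.1: $A$ is densely defined, $A^r$ is closed for all $r\ge1$, and there are a dense set $X_0\subset\bigcap_n D(A^n)$ and $B:X_0\to X_0$ with $ABx=x$, and $\sum_{n\ge1}A^nx$, $\sum_{n\ge1}B^nx$ unconditionally convergent for all $x\in X_0$. Then for every $n\in\mathbb{N}$ the power $A^n$ is frequently hypercyclic.
   Context: A series $\sum_k x_k$ converges unconditionally if for every $\varepsilon>0$ there is $N$ with $\|\sum_{k\in F}x_k\|<\varepsilon$ for every finite $F\subset\mathbb{N}$ disjoint from $\{1,\dots,N\}$. An operator $T$ is frequently hypercyclic if there is $f\in D(T)$ with $T^mf\in D(T)$ for all $m\ge1$ such that for every non-empty open $U\subset X$ the set $\{m: T^mf\in U\}$ has positive lower density, where the lower density of $E\subset\mathbb{N}$ is $\liminf_{N}\#(E\cap\{1,\dots,N\})/N$. *)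

theory Defs
  imports "HOL-Analysis.Analysis" "HOL-Library.Liminf_Limsup"
begin

text \<open>An (unbounded) operator in X is modelled by a domain D and a map A,
  only the values of A on D being relevant.\<close>

definition linear_operator_on :: "'a::real_vector set \<Rightarrow> ('a \<Rightarrow> 'a) \<Rightarrow> bool" where
  "linear_operator_on D A \<longleftrightarrow> subspace D \<and>
     (\<forall>x\<in>D. \<forall>y\<in>D. A (x + y) = A x + A y) \<and>
     (\<forall>c. \<forall>x\<in>D. A (c *\<^sub>R x) = c *\<^sub>R A x)"

definition dom_pow :: "'a set \<Rightarrow> ('a \<Rightarrow> 'a) \<Rightarrow> nat \<Rightarrow> 'a set" where
  "dom_pow D A n = {x. \<forall>k<n. (A ^^ k) x \<in> D}"

definition closed_operator :: "'a::topological_space set \<Rightarrow> ('a \<Rightarrow> 'a) \<Rightarrow> bool" where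
  "closed_operator D T \<longleftrightarrow> closed {(x, T x) | x. x \<in> D}"

definition uncond_conv :: "(nat \<Rightarrow> 'a::real_normed_vector) \<Rightarrow> bool" where
  "uncond_conv x \<longleftrightarrow> (\<forall>\<epsilon>>0. \<exists>N. \<forall>F. finite F \<and> F \<subseteq> {1..} \<and> F \<inter> {1..N} = {}
        \<longrightarrow> norm (\<Sum>k\<in>F. x k) < \<epsilon>)"

definition lower_density :: "nat set \<Rightarrow> ereal" where
  "lower_density E = liminf (\<lambda>N. ereal (real (card (E \<inter> {1..N})) / real N))"

definition freq_hypercyclic :: "'a::topological_space set \<Rightarrow> ('a \<Rightarrow> 'a) \<Rightarrow> bool" where
  "freq_hypercyclic D T \<longleftrightarrow> (\<exists>f\<in>D. (\<forall>m\<ge>1. (T ^^ m) f \<in> D) \<and>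
      (\<forall>U. open U \<and> U \<noteq> {} \<longrightarrow> lower_density {m. (T ^^ m) f \<in> U} > 0))"

definition separable_space :: "'a::topological_space itself \<Rightarrow> bool" where
  "separable_space _ \<longleftrightarrow> (\<exists>S::'a set. countable S \<and> closure S = UNIV)"

definition infinite_dim :: "'a::real_vector itself \<Rightarrow> bool" where
  "infinite_dim _ \<longleftrightarrow> \<not> (\<exists>S::'a set. finite S \<and> span S = UNIV)"

end

theory Submission
  imports Defs
begin

definition Mc :: "(nat \<Rightarrow> nat) \<Rightarrow> nat \<Rightarrow> nat" where
  "Mc N l = 128 * 2 ^ l * (N l + 1)"

lemma Mc_ge: "2 \<le> Mc N l" "4 * N l \<le> Mc N l" "1 \<le> Mc N l"
proof -
  have "1 \<le> (2::nat) ^ l" by simp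
  then have "128 * 1 \<le> 128 * (2::nat) ^ l" by (rule mult_le_mono2)
  then have "128 * 1 * (N l + 1) \<le> 128 * 2 ^ l * (N l + 1)" by (rule mult_le_mono1)
  then have h: "128 * (N l + 1) \<le> Mc N l" unfolding Mc_def by simp
  show "2 \<le> Mc N l" using h unfolding distrib_left by linarith
  show "4 * N l \<le> Mc N l" using h unfolding distrib_left by linarith
  show "1 \<le> Mc N l" using h unfolding distrib_left by linarith
qed

primrec Mq :: "(nat \<Rightarrow> nat) \<Rightarrow> nat \<Rightarrow> nat" where
  "Mq N 0 = 4 * N 0 + 1"
| "Mq N (Suc l) = Mq N l * Mc N (Suc l)"

lemma Mq_pos: "1 \<le> Mq N l"
  by (induction l) (use Mc_ge in auto)

lemma Mq_ge4: "4 * N l \<le> Mq N l"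
proof (cases l)
  case (Suc p)
  have "4 * N l \<le> 1 * Mc N l" using Mc_ge(2)[of N l] by simp
  also have "\<dots> \<le> Mq N p * Mc N l"
    using Mq_pos[of N p] by (intro mult_right_mono) auto
  finally show ?thesis using Suc by simp
qed simp

lemma Mq_Suc2: "2 * Mq N l \<le> Mq N (Suc l)"
  using Mc_ge(1)[of N "Suc l"] by (simp add: mult.commute)

lemma Mq_pow: "2 ^ l \<le> Mq N l"
proof (induction l)
  case (Suc l) then show ?case using Mq_Suc2[of N l] by (simp only: power_Suc)
qed simp

lemma Mq_dvd: "l \<le> l' \<Longrightarrow> Mq N l dvd Mq N l'"
proof (induction l' rule: dec_induct)
  case (step m) then show ?case by (simp add: dvd_mult2)
qed simp

lemma Mq_mono: "l \<le> l' \<Longrightarrow> Mq N l \<le> Mq N l'"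
  using Mq_dvd[of l l' N] Mq_pos[of N l'] by (simp add: dvd_imp_le)

lemma Mq_ratio:
  assumes "j < l"
  shows "real (N l) / Mq N l \<le> (1/2)^l / (128 * Mq N j)"
proof -
  obtain p where l: "l = Suc p" and jp: "j \<le> p" using assms by (cases l) auto
  have Mj: "real (Mq N j) \<le> Mq N p" using Mq_mono[OF jp] by simp
  have pos: "0 < real (Mq N j)" using Mq_pos[of N j] by simp
  have "real (N l) / Mq N l = real (N l) / (real (Mq N p) * (128 * 2 ^ l * (real (N l) + 1)))"
    using l by (simp add: Mc_def ring_distribs)
  also have "\<dots> = (real (N l) / (real (N l) + 1)) * (1 / (real (Mq N p) * 128 * 2 ^ l))"
    by (simp add: field_simps)
  also have "\<dots> \<le> 1 * (1 / (real (Mq N p) * 128 * 2 ^ l))"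
    by (intro mult_right_mono) auto
  also have "\<dots> = 1 / (real (Mq N p) * 128 * 2 ^ l)" by simp
  also have "\<dots> \<le> 1 / (real (Mq N j) * 128 * 2 ^ l)"
    using Mj pos by (intro divide_left_mono) auto
  also have "\<dots> = (1/2)^l / (128 * Mq N j)"
    by (simp add: field_simps power_one_over)
  finally show ?thesis .
qed

lemma card_multiples:
  assumes "1 \<le> M"
  shows "card {k \<in> {1..x}. M dvd k} = x div M"
proof -
  have "{k \<in> {1..x}. M dvd k} = (\<lambda>i. M * i) ` {1..x div M}"
  proof safe
    fix k assume k: "k \<in> {1..x}" "M dvd k"
    then obtain i where i: "k = M * i" by blast
    have "1 \<le> i" using k i by (cases i) auto
    moreover have "i \<le> x div M" using k i assms
      by (metis atLeastAtMost_iff div_le_mono nonzero_mult_div_cancel_left not_one_le_zero)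
    ultimately show "k \<in> (\<lambda>i. M * i) ` {1..x div M}" using i by auto
  next
    fix i assume "i \<in> {1..x div M}"
    then show "M * i \<in> {1..x}" using assms
      by (auto simp: less_eq_div_iff_mult_less_eq mult.commute)
  qed auto
  moreover have "inj_on (\<lambda>i. M * i) {1..x div M}" using assms by (auto simp: inj_on_def)
  ultimately show ?thesis by (simp add: card_image)
qed

lemma real_div_le: "real (x div M) \<le> real x / real M"
proof (cases "M = 0")
  case False
  have "M * (x div M) \<le> x" by simp
  then have "real M * real (x div M) \<le> real x" by (metis of_nat_le_iff of_nat_mult)
  then show ?thesis using False by (simp add: field_simps)
qed simp

definition Sset :: "(nat \<Rightarrow> nat) \<Rightarrow> nat \<Rightarrow> nat set" where
  "Sset N j = {k. 1 \<le> k \<and> Mq N j dvd k \<and> \<not> Mq N (Suc j) dvd k \<and>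
     (\<forall>l>j. \<forall>s. 1 \<le> s \<longrightarrow> Mq N l dvd s \<longrightarrow> s + 2 * N l \<le> k \<or> k + 2 * N l \<le> s)}"

lemma Sset_disj: "j \<noteq> j' \<Longrightarrow> Sset N j \<inter> Sset N j' = {}"
proof -
  have *: "Sset N j \<inter> Sset N j' = {}" if "j < j'" for j j'
  proof -
    have "Mq N (Suc j) dvd Mq N j'" using that by (intro Mq_dvd) auto
    then show ?thesis unfolding Sset_def using dvd_trans by blast
  qed
  assume "j \<noteq> j'"
  then show ?thesis using *[of j j'] *[of j' j] by (cases "j < j'") auto
qed

lemma Sset_ge: "k \<in> Sset N j \<Longrightarrow> 2 * N j \<le> k"
proof -
  assume k: "k \<in> Sset N j"
  then have "Mq N j \<le> k" unfolding Sset_def by (auto intro: dvd_imp_le)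
  then show ?thesis using Mq_ge4[of N j] by linarith
qed

lemma Sset_sep:
  assumes "mono N" "k \<in> Sset N j" "k' \<in> Sset N j'" "k < k'"
  shows "k + N j + N j' \<le> k'"
proof -
  consider "j = j'" | "j < j'" | "j' < j" by linarith
  then show ?thesis
  proof cases
    case 1
    have "Mq N j dvd k' - k" using assms 1 unfolding Sset_def by (auto intro: dvd_diff_nat)
    then have "Mq N j \<le> k' - k" using assms by (auto intro: dvd_imp_le)
    moreover have "N j' = N j" using 1 by simp
    ultimately show ?thesis using Mq_ge4[of N j] assms(4) by linarith
  next
    case 2
    have "1 \<le> k'" "Mq N j' dvd k'" using assms unfolding Sset_def by auto
    then have "k' + 2 * N j' \<le> k \<or> k + 2 * N j' \<le> k'"
      using assms(2) 2 unfolding Sset_def by blast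
    moreover have "N j \<le> N j'" using assms(1) 2 by (simp add: monoD)
    ultimately show ?thesis using assms(4) by linarith
  next
    case 3
    have "1 \<le> k" "Mq N j dvd k" using assms unfolding Sset_def by auto
    then have "k + 2 * N j \<le> k' \<or> k' + 2 * N j \<le> k"
      using assms(3) 3 unfolding Sset_def by blast
    moreover have "N j' \<le> N j" using assms(1) 3 by (simp add: monoD)
    ultimately show ?thesis using assms(4) by linarith
  qed
qed

lemma geo_sum_le2: "(\<Sum>l\<in>L. (1/2::real)^l) \<le> 2" if "L \<subseteq> {..<K}"
proof -
  have "(\<Sum>l\<in>L. (1/2::real)^l) \<le> (\<Sum>l<K. (1/2::real)^l)"
    using that by (intro sum_mono2) auto
  also have "\<dots> = (1 - (1/2)^K) / (1/2)" by (simp add: sum_gp_strict)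
  also have "\<dots> \<le> 2" by simp
  finally show ?thesis .
qed

lemma Sset_dens:
  assumes "8 * Mq N j \<le> x"
  shows "real x / (4 * Mq N j) \<le> card (Sset N j \<inter> {1..x})"
proof -
  define M where "M = Mq N j"
  define M' where "M' = Mq N (Suc j)"
  have M1: "1 \<le> M" "1 \<le> M'" unfolding M_def M'_def by (rule Mq_pos)+
  have MM': "2 * M \<le> M'" unfolding M_def M'_def by (rule Mq_Suc2)
  have Mdvd: "M dvd M'" unfolding M_def M'_def by (intro Mq_dvd) auto
  define Z where "Z = {k \<in> {1..x}. M dvd k} - {k \<in> {1..x}. M' dvd k}"
  define R where "R = (\<Union>l\<in>{Suc j..<2*x}. \<Union>s\<in>{s \<in> {1..<2*x}. Mq N l dvd s}. {s - 2 * N l..<s + 2 * N l})"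
  have sub: "Z - R \<subseteq> Sset N j \<inter> {1..x}"
  proof
    fix k assume kZR: "k \<in> Z - R"
    then have k: "1 \<le> k" "k \<le> x" "M dvd k" "\<not> M' dvd k" unfolding Z_def by auto
    have "s + 2 * N l \<le> k \<or> k + 2 * N l \<le> s" if l: "j < l" "1 \<le> s" "Mq N l dvd s" for l s
    proof (rule ccontr)
      assume "\<not> ?thesis"
      then have ks: "k < s + 2 * N l" "s < k + 2 * N l" by auto
      have "Mq N l \<le> s" using l by (auto intro: dvd_imp_le)
      then have s4: "4 * N l \<le> s" "2 ^ l \<le> s" using Mq_ge4[of N l] Mq_pow[of l N] by linarith+
      have s2x: "s < 2 * x" using ks s4 k by linarith
      have "l < 2 ^ l" by (rule less_exp)
      then have "l < 2 * x" using s4 s2x by linarith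
      then have m1: "l \<in> {Suc j..<2*x}" using l by auto
      have m2: "s \<in> {s \<in> {1..<2*x}. Mq N l dvd s}" using l s2x by auto
      have m3: "k \<in> {s - 2 * N l..<s + 2 * N l}" using ks by auto
      have "k \<in> R" unfolding R_def using m1 m2 m3 by blast
      then show False using kZR by blast
    qed
    then show "k \<in> Sset N j \<inter> {1..x}" unfolding Sset_def M_def[symmetric] M'_def[symmetric] using k by auto
  qed
  have finZ: "finite Z" "finite R" unfolding Z_def R_def by auto
  have cardZ: "card Z = x div M - x div M'"
  proof -
    have "{k \<in> {1..x}. M' dvd k} \<subseteq> {k \<in> {1..x}. M dvd k}" using Mdvd dvd_trans by blast
    then have "card Z = card {k \<in> {1..x}. M dvd k} - card {k \<in> {1..x}. M' dvd k}"
      unfolding Z_def by (intro card_Diff_subset) auto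
    then show ?thesis by (simp only: card_multiples[OF M1(1)] card_multiples[OF M1(2)])
  qed
  have "real (x div M') \<le> real x / M'" by (rule real_div_le)
  also have "\<dots> \<le> real x / (2 * M)" using MM' M1 by (intro divide_left_mono) auto
  finally have d1: "real (x div M') \<le> real x / (2 * M)" .
  have d2: "real x / M - 1 \<le> real (x div M)"
  proof -
    have "x = M * (x div M) + x mod M" by simp
    moreover have "x mod M < M" using M1 by simp
    ultimately have "real x \<le> M * (real (x div M) + 1)"
      by (metis add_le_cancel_left distrib_left less_or_eq_imp_le mult.right_neutral of_nat_add of_nat_le_iff of_nat_mult of_nat_1 ) 
    then show ?thesis using M1 by (simp add: field_simps)
  qed
  have x_div_le: "x div M' \<le> x div M" using MM' by (intro div_le_mono2) (use M1 in auto)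
  have cZ: "real x / M - 1 - real x / (2 * M) \<le> card Z"
    using cardZ d1 d2 x_div_le by (simp add: of_nat_diff)
  have cR0: "card R \<le> (\<Sum>l\<in>{Suc j..<2*x}. \<Sum>s\<in>{s \<in> {1..<2*x}. Mq N l dvd s}. card {s - 2 * N l..<s + 2 * N l})"
    unfolding R_def
  proof (rule order.trans[OF card_UN_le], simp, rule sum_mono)
    fix l assume "l \<in> {Suc j..<2 * x}"
    show "card (\<Union>s\<in>{s \<in> {1..<2*x}. Mq N l dvd s}. {s - 2 * N l..<s + 2 * N l})
      \<le> (\<Sum>s\<in>{s \<in> {1..<2*x}. Mq N l dvd s}. card {s - 2 * N l..<s + 2 * N l})"
      by (rule card_UN_le) simp
  qed
  have cR1: "real (card R) \<le> (\<Sum>l\<in>{Suc j..<2*x}. 8 * real x * (real (N l) / Mq N l))"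
  proof -
    have "real (card R) \<le> (\<Sum>l\<in>{Suc j..<2*x}. \<Sum>s\<in>{s \<in> {1..<2*x}. Mq N l dvd s}. real (card {s - 2 * N l..<s + 2 * N l}))"
      using cR0 by (metis (mono_tags, lifting) of_nat_le_iff of_nat_sum sum.cong)
    also have "\<dots> \<le> (\<Sum>l\<in>{Suc j..<2*x}. 8 * real x * (real (N l) / Mq N l))"
    proof (rule sum_mono)
      fix l assume "l \<in> {Suc j..<2*x}"
      have "(\<Sum>s\<in>{s \<in> {1..<2*x}. Mq N l dvd s}. real (card {s - 2 * N l..<s + 2 * N l}))
          \<le> (\<Sum>s\<in>{s \<in> {1..<2*x}. Mq N l dvd s}. 4 * real (N l))"
        by (intro sum_mono) auto
      also have "\<dots> = 4 * real (N l) * card {s \<in> {1..<2*x}. Mq N l dvd s}" by simp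
      also have "\<dots> \<le> 4 * real (N l) * card {s \<in> {1..2*x}. Mq N l dvd s}"
        by (intro mult_left_mono) (auto intro!: card_mono)
      also have "\<dots> = 4 * real (N l) * real (2 * x div Mq N l)"
        using card_multiples[OF Mq_pos[of N l], of "2*x"] by simp
      also have "\<dots> \<le> 4 * real (N l) * (2 * real x / Mq N l)"
        by (intro mult_left_mono) (use real_div_le[of "2*x" "Mq N l"] in auto)
      also have "\<dots> = 8 * real x * (real (N l) / Mq N l)" by simp
      finally show "(\<Sum>s\<in>{s \<in> {1..<2*x}. Mq N l dvd s}. real (card {s - 2 * N l..<s + 2 * N l}))
          \<le> 8 * real x * (real (N l) / Mq N l)" .
    qed
    finally show ?thesis .
  qed
  have cR2: "(\<Sum>l\<in>{Suc j..<2*x}. 8 * real x * (real (N l) / Mq N l)) \<le> real x / (8 * M)"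
  proof -
    have "(\<Sum>l\<in>{Suc j..<2*x}. 8 * real x * (real (N l) / Mq N l))
        \<le> (\<Sum>l\<in>{Suc j..<2*x}. 8 * real x * ((1/2)^l / (128 * M)))"
      unfolding M_def by (intro sum_mono mult_left_mono Mq_ratio) auto
    also have "\<dots> = real x / (16 * M) * (\<Sum>l\<in>{Suc j..<2*x}. (1/2)^l)"
      by (simp add: sum_distrib_left field_simps)
    also have "\<dots> \<le> real x / (16 * M) * 2"
      by (intro mult_left_mono geo_sum_le2[of _ "2*x"]) auto
    also have "\<dots> = real x / (8 * M)" by simp
    finally show ?thesis .
  qed
  have "real (card Z) - real (card R) \<le> real (card (Z - R))"
    using diff_card_le_card_Diff[OF finZ(2), of Z] by linarith
  also have "\<dots> \<le> card (Sset N j \<inter> {1..x})"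
    using sub by (simp add: card_mono)
  finally have "real x / M - 1 - real x / (2 * M) - real x / (8 * M) \<le> card (Sset N j \<inter> {1..x})"
    using cZ cR1 cR2 by linarith
  moreover have "real x / (4 * M) \<le> real x / M - 1 - real x / (2 * M) - real x / (8 * M)"
  proof -
    have "8 * real M \<le> real x" using assms unfolding M_def by simp
    then have "1 \<le> real x / (8 * M)" using M1 by simp
    moreover have "real x / M - real x / (2 * M) - real x / (8 * M) = real x / (4 * M) + real x / (8 * M)"
      using M1 by (simp add: field_simps)
    ultimately show ?thesis by linarith
  qed
  ultimately show ?thesis unfolding M_def by linarith
qed

lemma ld_pos:
  assumes "0 < d" "\<And>x. x0 \<le> x \<Longrightarrow> d * real x \<le> card (E \<inter> {1..x})"
  shows "lower_density E > 0"
proof -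
  have "eventually (\<lambda>x. ereal d \<le> ereal (real (card (E \<inter> {1..x})) / real x)) sequentially"
    unfolding eventually_sequentially
  proof (intro exI[of _ "max x0 1"] allI impI)
    fix x assume "max x0 1 \<le> x"
    then have "d * real x \<le> card (E \<inter> {1..x})" "0 < real x" using assms(2) by auto
    then show "ereal d \<le> ereal (real (card (E \<inter> {1..x})) / real x)"
      by (simp add: field_simps)
  qed
  then have "ereal d \<le> lower_density E" unfolding lower_density_def by (rule Liminf_bounded)
  moreover have "0 < ereal d" using assms(1) by simp
  ultimately show ?thesis by (meson less_le_trans)
qed

lemma unc_tail:
  assumes "uncond_conv x" "0 < e"
  shows "\<exists>K. \<forall>F. finite F \<longrightarrow> (\<forall>i\<in>F. K < i) \<longrightarrow> norm (sum x F) < e"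
proof -
  obtain K where K: "\<forall>F. finite F \<and> F \<subseteq> {1..} \<and> F \<inter> {1..K} = {} \<longrightarrow> norm (\<Sum>k\<in>F. x k) < e"
    using assms unfolding uncond_conv_def by blast
  show ?thesis
  proof (intro exI[of _ K] allI impI)
    fix F :: "nat set" assume "finite F" "\<forall>i\<in>F. K < i"
    then have "finite F \<and> F \<subseteq> {1..} \<and> F \<inter> {1..K} = {}" by force
    then show "norm (sum x F) < e" using K by blast
  qed
qed

lemma group_norm:
  fixes w :: "'b \<Rightarrow> 'a::real_normed_vector"
  assumes "finite G" "\<And>j. j \<in> lab ` G \<Longrightarrow> norm (\<Sum>k\<in>{k\<in>G. lab k = j}. w k) \<le> c j"
  shows "norm (sum w G) \<le> sum c (lab ` G)"
proof -
  have "sum w G = (\<Sum>j\<in>lab ` G. \<Sum>k\<in>{k\<in>G. lab k = j}. w k)"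
    by (rule sum.group[symmetric]) (auto simp: assms(1))
  also have "norm \<dots> \<le> (\<Sum>j\<in>lab ` G. norm (\<Sum>k\<in>{k\<in>G. lab k = j}. w k))"
    by (rule norm_sum)
  also have "\<dots> \<le> sum c (lab ` G)" using assms(2) by (rule sum_mono)
  finally show ?thesis .
qed

lemma geo_tail:
  assumes "finite J" "\<And>j. j \<in> J \<Longrightarrow> l < j"
  shows "(\<Sum>j\<in>J. (1/2::real)^j) \<le> (1/2)^l"
proof (cases "J = {}")
  case False
  define K where "K = Max J"
  have "J \<subseteq> {Suc l..K}" using assms False unfolding K_def by (auto simp: Suc_le_eq)
  then have "(\<Sum>j\<in>J. (1/2::real)^j) \<le> (\<Sum>j=Suc l..K. (1/2::real)^j)"
    by (intro sum_mono2) auto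
  also have "\<dots> \<le> (1/2)^l"
  proof (cases "K < Suc l")
    case False
    then have "(\<Sum>j=Suc l..K. (1/2::real)^j) = ((1/2)^Suc l - (1/2)^Suc K) / (1/2)"
      by (simp add: sum_gp)
    also have "\<dots> \<le> (1/2)^Suc l / (1/2)" by (intro divide_right_mono) auto
    also have "\<dots> = (1/2)^l" by simp
    finally show ?thesis .
  qed simp
  finally show ?thesis .
qed simp

lemma delta_max_sum:
  assumes "finite J"
  shows "(\<Sum>j\<in>J. (1/2::real)^(max j l) / real (max j l + 1)) \<le> 2 * (1/2)^l"
proof -
  let ?d = "\<lambda>j. (1/2::real)^(max j l) / real (max j l + 1)"
  have "(\<Sum>j\<in>J. ?d j) = (\<Sum>j\<in>J \<inter> {..l}. ?d j) + (\<Sum>j\<in>J - {..l}. ?d j)"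
    using assms by (rule sum.Int_Diff)
  also have "J \<inter> {..l} = {j\<in>J. j \<le> l}" by auto
  also have "J - {..l} = {j\<in>J. \<not> j \<le> l}" by auto
  also have "(\<Sum>j\<in>{j\<in>J. j \<le> l}. ?d j) = card {j\<in>J. j \<le> l} * ((1/2)^l / real (l+1))"
    by (simp add: max_def)
  also have "\<dots> \<le> real (l+1) * ((1/2)^l / real (l+1))"
  proof (intro mult_right_mono)
    have "card {j\<in>J. j \<le> l} \<le> card {..l}" by (intro card_mono) auto
    then show "real (card {j\<in>J. j \<le> l}) \<le> real (l+1)" by simp
  qed simp
  also have "\<dots> = (1/2)^l" by simp
  also have "(\<Sum>j\<in>{j\<in>J. \<not> j \<le> l}. ?d j) \<le> (\<Sum>j\<in>{j\<in>J. \<not> j \<le> l}. (1/2)^j)"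
  proof (intro sum_mono)
    fix j assume "j \<in> {j\<in>J. \<not> j \<le> l}"
    then have "max j l = j" by auto
    moreover have "(1/2::real)^j / real (j + 1) \<le> (1/2)^j / 1"
      by (intro divide_left_mono) auto
    ultimately show "?d j \<le> (1/2)^j" by simp
  qed
  also have "\<dots> \<le> (1/2)^l" using assms by (intro geo_tail) auto
  finally show ?thesis by simp
qed

lemma label_bound:
  fixes Z :: "nat \<Rightarrow> nat \<Rightarrow> 'a::real_normed_vector"
  assumes TBZ: "\<And>l j F. j \<le> l \<Longrightarrow> finite F \<Longrightarrow> (\<forall>i\<in>F. N l \<le> i) \<Longrightarrow>
      norm (\<Sum>i\<in>F. Z j i) \<le> (1/2)^l / real (l+1)"
    and fin: "finite G"
    and inj: "\<And>j. inj_on e {k\<in>G. lab k = j}"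
    and big: "\<And>k. k \<in> G \<Longrightarrow> N (max (lab k) l) \<le> e k"
  shows "norm (\<Sum>k\<in>G. Z (lab k) (e k)) \<le> 2 * (1/2)^l"
proof -
  have "norm (\<Sum>k\<in>G. Z (lab k) (e k)) \<le> (\<Sum>j\<in>lab ` G. (1/2::real)^(max j l) / real (max j l + 1))"
  proof (rule group_norm[OF fin])
    fix j assume "j \<in> lab ` G"
    have "(\<Sum>k\<in>{k\<in>G. lab k = j}. Z (lab k) (e k)) = (\<Sum>k\<in>{k\<in>G. lab k = j}. Z j (e k))"
      by (rule sum.cong) auto
    also have "\<dots> = (\<Sum>i\<in>e ` {k\<in>G. lab k = j}. Z j i)"
      by (rule sum.reindex[OF inj, symmetric, unfolded comp_def])
    finally have eq: "(\<Sum>k\<in>{k\<in>G. lab k = j}. Z (lab k) (e k)) = (\<Sum>i\<in>e ` {k\<in>G. lab k = j}. Z j i)" .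
    have "norm (\<Sum>i\<in>e ` {k\<in>G. lab k = j}. Z j i) \<le> (1/2)^(max j l) / real (max j l + 1)"
      using big fin by (intro TBZ) auto
    then show "norm (\<Sum>k\<in>{k\<in>G. lab k = j}. Z (lab k) (e k)) \<le> (1/2)^(max j l) / real (max j l + 1)"
      using eq by simp
  qed
  also have "\<dots> \<le> 2 * (1/2)^l" using fin by (intro delta_max_sum) auto
  finally show ?thesis .
qed

lemma dp_Suc: "x \<in> dom_pow D A (Suc r) \<longleftrightarrow> x \<in> dom_pow D A r \<and> (A ^^ r) x \<in> D"
proof
  assume "x \<in> dom_pow D A (Suc r)"
  then show "x \<in> dom_pow D A r \<and> (A ^^ r) x \<in> D" unfolding dom_pow_def by simp
next
  assume a: "x \<in> dom_pow D A r \<and> (A ^^ r) x \<in> D"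
  show "x \<in> dom_pow D A (Suc r)" unfolding dom_pow_def
  proof (intro CollectI allI impI)
    fix k assume "k < Suc r"
    then consider "k < r" | "k = r" by linarith
    then show "(A ^^ k) x \<in> D" using a unfolding dom_pow_def by cases auto
  qed
qed

lemma dp_mono: "r \<le> r' \<Longrightarrow> x \<in> dom_pow D A r' \<Longrightarrow> x \<in> dom_pow D A r"
  unfolding dom_pow_def by simp
lemma dp_add:
  assumes lin: "linear_operator_on D A"
  shows "x \<in> dom_pow D A r \<Longrightarrow> y \<in> dom_pow D A r \<Longrightarrow>
    x + y \<in> dom_pow D A r \<and> (A ^^ r) (x + y) = (A ^^ r) x + (A ^^ r) y"
proof (induction r)
  case 0 then show ?case by (simp add: dom_pow_def)
next
  case (Suc r)
  have x: "x \<in> dom_pow D A r" "(A ^^ r) x \<in> D" and y: "y \<in> dom_pow D A r" "(A ^^ r) y \<in> D"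
    using Suc.prems dp_Suc[of x D A r] dp_Suc[of y D A r] by simp_all
  have IH: "x + y \<in> dom_pow D A r" "(A ^^ r) (x + y) = (A ^^ r) x + (A ^^ r) y"
    using Suc.IH x(1) y(1) by simp_all
  have "subspace D" using lin unfolding linear_operator_on_def by simp
  then have "(A ^^ r) x + (A ^^ r) y \<in> D" using x(2) y(2) by (rule subspace_add)
  then have "(A ^^ r) (x + y) \<in> D" using IH(2) by simp
  moreover have "A ((A ^^ r) x + (A ^^ r) y) = A ((A ^^ r) x) + A ((A ^^ r) y)"
    using lin x(2) y(2) unfolding linear_operator_on_def by simp
  ultimately show ?case using IH dp_Suc[of "x + y" D A r] by simp
qed

lemma dp_zero:
  assumes lin: "linear_operator_on D A"
  shows "0 \<in> dom_pow D A r \<and> (A ^^ r) 0 = 0"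
proof -
  have D0: "0 \<in> D" using lin unfolding linear_operator_on_def by (auto intro: subspace_0)
  have A0: "A 0 = 0"
  proof -
    have "A ((0::real) *\<^sub>R 0) = (0::real) *\<^sub>R A 0" using lin D0 unfolding linear_operator_on_def by blast
    then show ?thesis by simp
  qed
  show ?thesis
  proof (induction r)
    case 0 then show ?case by (simp add: dom_pow_def)
  next
    case (Suc r) then show ?case using dp_Suc[of 0 D A r] D0 A0 by simp
  qed
qed

lemma dp_sum:
  assumes lin: "linear_operator_on D A" and "finite F"
  shows "(\<forall>k\<in>F. g k \<in> dom_pow D A r) \<Longrightarrow>
    sum g F \<in> dom_pow D A r \<and> (A ^^ r) (sum g F) = (\<Sum>k\<in>F. (A ^^ r) (g k))"
  using assms(2)
proof (induction F rule: finite_induct)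
  case empty then show ?case using dp_zero[OF lin] by simp
next
  case (insert a F)
  then have "g a \<in> dom_pow D A r" "sum g F \<in> dom_pow D A r \<and> (A ^^ r) (sum g F) = (\<Sum>k\<in>F. (A ^^ r) (g k))"
    by auto
  then show ?case using dp_add[OF lin, of "g a" r "sum g F"] insert(1,2) by simp
qed

locale fhc =
  fixes D :: "'a::banach set" and A B :: "'a \<Rightarrow> 'a" and X0 :: "'a set" and n :: nat
    and y :: "nat \<Rightarrow> 'a" and N :: "nat \<Rightarrow> nat"
  assumes lin: "linear_operator_on D A"
    and clo: "\<And>r. r \<ge> 1 \<Longrightarrow> closed_operator (dom_pow D A r) (A ^^ r)"
    and X0sub: "X0 \<subseteq> (\<Inter>n. dom_pow D A n)"
    and BX0: "\<And>x. x \<in> X0 \<Longrightarrow> B x \<in> X0"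
    and AB: "\<And>x. x \<in> X0 \<Longrightarrow> A (B x) = x"
    and n1: "1 \<le> n"
    and yX0: "\<And>l. y l \<in> X0"
    and Nmono: "mono N" and Nge: "\<And>l. l + 1 \<le> N l"
    and TBB: "\<And>l j F. j \<le> l \<Longrightarrow> finite F \<Longrightarrow> (\<forall>i\<in>F. N l \<le> i) \<Longrightarrow>
       norm (\<Sum>i\<in>F. (B ^^ i) (y j)) \<le> (1/2)^l / real (l+1)"
    and TBA: "\<And>l j F. j \<le> l \<Longrightarrow> finite F \<Longrightarrow> (\<forall>i\<in>F. N l \<le> i) \<Longrightarrow>
       norm (\<Sum>i\<in>F. (A ^^ i) (y j)) \<le> (1/2)^l / real (l+1)"
begin

definition "P = (\<Union>j. Sset N j)"
definition "lab k = (SOME j. k \<in> Sset N j)"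
definition "v r k = (if k \<in> P then (if r \<le> n * k then (B ^^ (n * k - r)) (y (lab k))
    else (A ^^ (r - n * k)) (y (lab k))) else 0)"
definition "f = suminf (v 0)"

lemma lab_eq: assumes "k \<in> Sset N j" shows "lab k = j"
proof -
  have "k \<in> Sset N (lab k)" unfolding lab_def using assms by (rule someI)
  then show ?thesis using assms Sset_disj[of "lab k" j N] by blast
qed

lemma P_lab: "k \<in> P \<Longrightarrow> k \<in> Sset N (lab k)"
  unfolding P_def using lab_eq by blast

lemma Bpow: "x \<in> X0 \<Longrightarrow> (B ^^ q) x \<in> X0"
  by (induction q) (auto intro: BX0)

lemma ABpow: assumes x: "x \<in> X0"
  shows "(A ^^ r) ((B ^^ q) x) = (if r \<le> q then (B ^^ (q - r)) x else (A ^^ (r - q)) x)"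
proof (induction r)
  case 0 then show ?case by simp
next
  case (Suc r)
  show ?case
  proof (cases "Suc r \<le> q")
    case True
    then have "q - r = Suc (q - Suc r)" by simp
    then have "(A ^^ Suc r) ((B ^^ q) x) = A (B ((B ^^ (q - Suc r)) x))"
      using Suc True by simp
    also have "\<dots> = (B ^^ (q - Suc r)) x" using AB Bpow x by blast
    finally show ?thesis using True by simp
  next
    case False
    show ?thesis
    proof (cases "r = q")
      case True then show ?thesis using Suc False by simp
    next
      case False2: False
      then have "Suc r - q = Suc (r - q)" "\<not> r \<le> q" using False by auto
      then show ?thesis using Suc False by simp
    qed
  qed
qed

lemma v0_dom: "v 0 k \<in> dom_pow D A r"
proof (cases "k \<in> P")
  case True
  then have "v 0 k \<in> X0" unfolding v_def using Bpow yX0 by simp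
  then show ?thesis using X0sub by blast
next
  case False then show ?thesis unfolding v_def using dp_zero[OF lin] by simp
qed

lemma v_eq: "v r k = (A ^^ r) (v 0 k)"
proof (cases "k \<in> P")
  case True then show ?thesis unfolding v_def using ABpow[OF yX0] by simp
next
  case False then show ?thesis unfolding v_def using dp_zero[OF lin] by simp
qed

lemma sum_P: "finite G \<Longrightarrow> sum (v r) G = sum (v r) {k\<in>G. k \<in> P}"
  by (rule sum.mono_neutral_right) (auto simp: v_def)

lemma summable_v: "summable (v r)"
  unfolding summable_Cauchy
proof (intro allI impI)
  fix e :: real assume e: "0 < e"
  obtain l0 where l0: "(1/2::real)^l0 < e/2" using real_arch_pow_inv[of "e/2" "1/2"] e by auto
  define l where "l = l0 + r"
  have "(1/2::real)^l \<le> (1/2)^l0" unfolding l_def by (intro power_decreasing) auto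
  then have le: "2 * (1/2::real)^l < e" using l0 by linarith
  show "\<exists>K. \<forall>a\<ge>K. \<forall>b. norm (sum (v r) {a..<b}) < e"
  proof (intro exI[of _ "r + N l + 1"] allI impI)
    fix a b assume a: "r + N l + 1 \<le> a"
    define G where "G = {k\<in>{a..<b}. k \<in> P}"
    have "sum (v r) {a..<b} = sum (v r) G" unfolding G_def by (rule sum_P) simp
    also have "\<dots> = (\<Sum>k\<in>G. (B ^^ (n * k - r)) (y (lab k)))"
    proof (rule sum.cong)
      fix k assume "k \<in> G"
      then have k: "k \<in> P" "a \<le> k" unfolding G_def by auto
      have "k \<le> n * k" using n1 by simp
      then have "r \<le> n * k" using k a by linarith
      note k this
      then show "v r k = (B ^^ (n * k - r)) (y (lab k))" unfolding v_def by simp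
    qed simp
    finally have eq: "sum (v r) {a..<b} = (\<Sum>k\<in>G. (B ^^ (n * k - r)) (y (lab k)))" .
    have kG: "a \<le> k \<and> k \<in> P \<and> k \<le> n * k" if "k \<in> G" for k
      using that n1 unfolding G_def by auto
    have "norm (\<Sum>k\<in>G. (B ^^ (n * k - r)) (y (lab k))) \<le> 2 * (1/2)^l"
    proof (rule label_bound[where N = N and Z = "\<lambda>j i. (B ^^ i) (y j)" and e = "\<lambda>k. n * k - r"
          and lab = lab and G = G and l = l, simplified])
      show "\<And>l j F. j \<le> l \<Longrightarrow> finite F \<Longrightarrow> \<forall>i\<in>F. N l \<le> i \<Longrightarrow>
        norm (\<Sum>i\<in>F. (B ^^ i) (y j)) \<le> (1/2)^l / (1 + real l)"
        using TBB by simp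
    next
      show "finite G" unfolding G_def by simp
    next
      fix j show "inj_on (\<lambda>k. n * k - r) {k \<in> G. lab k = j}"
      proof (rule inj_onI)
        fix k k' assume "k \<in> {k \<in> G. lab k = j}" "k' \<in> {k \<in> G. lab k = j}" "n * k - r = n * k' - r"
        then have k1: "a \<le> k" "k \<le> n * k" "a \<le> k'" "k' \<le> n * k'" using kG by auto
        then have "r \<le> n * k" "r \<le> n * k'" using a by linarith+
        then have "n * k = (n * k - r) + r" "n * k' = (n * k' - r) + r" by simp_all
        with \<open>n * k - r = n * k' - r\<close> have "n * k = n * k'" by simp
        then show "k = k'" using n1 by simp
      qed
    next
      fix k assume k: "k \<in> G"
      have k1: "a \<le> k" "k \<le> n * k" "k \<in> P" using kG[OF k] by auto
      show "N (max (lab k) l) \<le> n * k - r"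
      proof (cases "lab k \<le> l")
        case True
        then have "max (lab k) l = l" by simp
        moreover have "N l + r \<le> n * k" using k1 a by linarith
        ultimately show ?thesis by simp
      next
        case False
        then have mx: "max (lab k) l = lab k" by simp
        have "2 * N (lab k) \<le> k" using P_lab[OF k1(3)] by (rule Sset_ge)
        moreover have "lab k + 1 \<le> N (lab k)" by (rule Nge)
        ultimately have "N (lab k) + r \<le> n * k" using False k1 unfolding l_def by linarith
        then show ?thesis using mx by simp
      qed
    qed
    then show "norm (sum (v r) {a..<b}) < e" using eq le by simp
  qed
qed

lemma f_dom: assumes r: "1 \<le> r" shows "f \<in> dom_pow D A r \<and> (A ^^ r) f = suminf (v r)"
proof -
  have cl: "closed {(x, (A ^^ r) x) |x. x \<in> dom_pow D A r}"
    using clo[OF r] unfolding closed_operator_def .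
  define s where "s K = (\<Sum>k<K. v 0 k)" for K
  have sK: "s K \<in> dom_pow D A r \<and> (A ^^ r) (s K) = (\<Sum>k<K. v r k)" for K
  proof -
    have "s K \<in> dom_pow D A r \<and> (A ^^ r) (s K) = (\<Sum>k<K. (A ^^ r) (v 0 k))"
      unfolding s_def by (rule dp_sum[OF lin]) (simp_all add: v0_dom)
    moreover have "(\<Sum>k<K. (A ^^ r) (v 0 k)) = (\<Sum>k<K. v r k)"
      by (rule sum.cong) (simp_all add: v_eq[symmetric])
    ultimately show ?thesis by simp
  qed
  have lim: "(\<lambda>K. (s K, (A ^^ r) (s K))) \<longlonglongrightarrow> (f, suminf (v r))"
  proof (rule tendsto_Pair)
    show "s \<longlonglongrightarrow> f" unfolding s_def f_def by (rule summable_LIMSEQ[OF summable_v])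
    show "(\<lambda>K. (A ^^ r) (s K)) \<longlonglongrightarrow> suminf (v r)"
      using summable_LIMSEQ[OF summable_v, of r] sK by simp
  qed
  have "(f, suminf (v r)) \<in> {(x, (A ^^ r) x) |x. x \<in> dom_pow D A r}"
    by (rule closed_sequentially[OF cl _ lim]) (use sK in blast)
  then show ?thesis by auto
qed

lemma est:
  assumes m: "m \<in> Sset N l"
  shows "norm (suminf (v (n * m)) - y l) \<le> 4 * (1/2)^l"
proof -
  define r where "r = n * m"
  have mP: "m \<in> P" unfolding P_def using m by blast
  have labm: "lab m = l" using m by (rule lab_eq)
  have vm: "v r m = y l" unfolding v_def r_def using mP labm by simp
  have bound: "norm ((\<Sum>k<K. v r k) - y l) \<le> 4 * (1/2)^l" if K: "m < K" for K
  proof -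
    define G where "G = {k \<in> {..<K} - {m}. k \<in> P}"
    define Gp where "Gp = {k \<in> G. m < k}"
    define Gm where "Gm = {k \<in> G. k < m}"
    have finG: "finite G" "finite Gp" "finite Gm" unfolding G_def Gp_def Gm_def by auto
    have "(\<Sum>k<K. v r k) = v r m + sum (v r) ({..<K} - {m})"
      using K by (intro sum.remove) auto
    also have "sum (v r) ({..<K} - {m}) = sum (v r) G" unfolding G_def by (rule sum_P) simp
    also have "G = Gp \<union> Gm" unfolding Gp_def Gm_def G_def by auto
    also have "sum (v r) (Gp \<union> Gm) = sum (v r) Gp + sum (v r) Gm"
      using finG by (intro sum.union_disjoint) (auto simp: Gp_def Gm_def)
    finally have eq: "(\<Sum>k<K. v r k) - y l = sum (v r) Gp + sum (v r) Gm" using vm by simp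
    have kGp: "k \<in> P \<and> m < k" if "k \<in> Gp" for k using that unfolding Gp_def G_def by auto
    have kGm: "k \<in> P \<and> k < m" if "k \<in> Gm" for k using that unfolding Gm_def G_def by auto
    have nmk: "n * m < n * k" if "m < k" for k using that n1 by simp
    have nkm: "n * k < n * m" if "k < m" for k using that n1 by simp
    have "sum (v r) Gp = (\<Sum>k\<in>Gp. (B ^^ (n * k - n * m)) (y (lab k)))"
    proof (rule sum.cong)
      fix k assume "k \<in> Gp"
      then show "v r k = (B ^^ (n * k - n * m)) (y (lab k))"
        using kGp nmk unfolding v_def r_def by (simp add: less_imp_le)
    qed simp
    also have "norm \<dots> \<le> 2 * (1/2)^l"
    proof (rule label_bound[where N = N and Z = "\<lambda>j i. (B ^^ i) (y j)" and e = "\<lambda>k. n * k - n * m"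
          and lab = lab and G = Gp and l = l, simplified])
      show "\<And>l j F. j \<le> l \<Longrightarrow> finite F \<Longrightarrow> \<forall>i\<in>F. N l \<le> i \<Longrightarrow>
        norm (\<Sum>i\<in>F. (B ^^ i) (y j)) \<le> (1/2)^l / (1 + real l)"
        using TBB by simp
    next
      show "finite Gp" by (rule finG)
    next
      fix j show "inj_on (\<lambda>k. n * k - n * m) {k \<in> Gp. lab k = j}"
      proof (rule inj_onI)
        fix k k' assume a: "k \<in> {k \<in> Gp. lab k = j}" "k' \<in> {k \<in> Gp. lab k = j}"
          "n * k - n * m = n * k' - n * m"
        then have "n * m < n * k" "n * m < n * k'" using kGp nmk by auto
        then have "n * k = (n * k - n * m) + n * m" "n * k' = (n * k' - n * m) + n * m" by simp_all
        with a(3) have "n * k = n * k'" by simp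
        then show "k = k'" using n1 by simp
      qed
    next
      fix k assume k: "k \<in> Gp"
      have k1: "k \<in> P" "m < k" using kGp[OF k] by auto
      have sep: "m + N l + N (lab k) \<le> k" using Sset_sep[OF Nmono m P_lab[OF k1(1)] k1(2)] .
      have "k - m \<le> n * (k - m)" using n1 by simp
      then have "N l + N (lab k) \<le> n * k - n * m" using sep by (simp add: diff_mult_distrib2)
      moreover have "N (max (lab k) l) \<le> N l + N (lab k)" by (simp add: max_def)
      ultimately show "N (max (lab k) l) \<le> n * k - n * m" by linarith
    qed
    finally have np: "norm (sum (v r) Gp) \<le> 2 * (1/2)^l" .
    have "sum (v r) Gm = (\<Sum>k\<in>Gm. (A ^^ (n * m - n * k)) (y (lab k)))"
    proof (rule sum.cong)
      fix k assume "k \<in> Gm"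
      then have "k \<in> P" "\<not> n * m \<le> n * k" using kGm nkm by (auto simp: not_le)
      then show "v r k = (A ^^ (n * m - n * k)) (y (lab k))"
        unfolding v_def r_def by simp
    qed simp
    also have "norm \<dots> \<le> 2 * (1/2)^l"
    proof (rule label_bound[where N = N and Z = "\<lambda>j i. (A ^^ i) (y j)" and e = "\<lambda>k. n * m - n * k"
          and lab = lab and G = Gm and l = l, simplified])
      show "\<And>l j F. j \<le> l \<Longrightarrow> finite F \<Longrightarrow> \<forall>i\<in>F. N l \<le> i \<Longrightarrow>
        norm (\<Sum>i\<in>F. (A ^^ i) (y j)) \<le> (1/2)^l / (1 + real l)"
        using TBA by simp
    next
      show "finite Gm" by (rule finG)
    next
      fix j show "inj_on (\<lambda>k. n * m - n * k) {k \<in> Gm. lab k = j}"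
      proof (rule inj_onI)
        fix k k' assume a: "k \<in> {k \<in> Gm. lab k = j}" "k' \<in> {k \<in> Gm. lab k = j}"
          "n * m - n * k = n * m - n * k'"
        then have "n * k < n * m" "n * k' < n * m" using kGm nkm by auto
        then have "n * m = (n * m - n * k) + n * k" "n * m = (n * m - n * k') + n * k'" by simp_all
        with a(3) have "n * k = n * k'" by linarith
        then show "k = k'" using n1 by simp
      qed
    next
      fix k assume k: "k \<in> Gm"
      have k1: "k \<in> P" "k < m" using kGm[OF k] by auto
      have sep: "k + N (lab k) + N l \<le> m" using Sset_sep[OF Nmono P_lab[OF k1(1)] m k1(2)] .
      have "m - k \<le> n * (m - k)" using n1 by simp
      then have "N l + N (lab k) \<le> n * m - n * k" using sep by (simp add: diff_mult_distrib2)
      moreover have "N (max (lab k) l) \<le> N l + N (lab k)" by (simp add: max_def)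
      ultimately show "N (max (lab k) l) \<le> n * m - n * k" by linarith
    qed
    finally have nm: "norm (sum (v r) Gm) \<le> 2 * (1/2)^l" .
    have "norm ((\<Sum>k<K. v r k) - y l) \<le> norm (sum (v r) Gp) + norm (sum (v r) Gm)"
      unfolding eq by (rule norm_triangle_ineq)
    then show ?thesis using np nm by simp
  qed
  have "(\<lambda>K. norm ((\<Sum>k<K. v r k) - y l)) \<longlonglongrightarrow> norm (suminf (v r) - y l)"
    by (intro tendsto_norm tendsto_diff summable_LIMSEQ[OF summable_v] tendsto_const)
  then have "norm (suminf (v r) - y l) \<le> 4 * (1/2)^l"
    by (rule LIMSEQ_le_const2) (use bound in \<open>auto intro!: exI[of _ "Suc m"]\<close>)
  then show ?thesis unfolding r_def .
qed

end

lemma dense_seq: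
  fixes X0 :: "'a::metric_space set"
  assumes sep: "separable_space TYPE('a)" and dense: "closure X0 = UNIV"
  shows "\<exists>y :: nat \<Rightarrow> 'a. (\<forall>l. y l \<in> X0) \<and> (\<forall>z \<rho> L. 0 < \<rho> \<longrightarrow> (\<exists>l\<ge>L. dist (y l) z < \<rho>))"
proof -
  obtain S0 :: "'a set" where S0: "countable S0" "closure S0 = UNIV"
    using sep unfolding separable_space_def by blast
  have ne: "S0 \<noteq> {}" using S0(2) by auto
  define e where "e = from_nat_into S0"
  have rng: "range e = S0" unfolding e_def using ne S0(1) by simp
  have "\<forall>a. \<exists>g. \<forall>q. g q \<in> X0 \<and> dist (g q) (e a) < 1 / (real q + 1)"
  proof
    fix a
    have "\<forall>q. \<exists>x. x \<in> X0 \<and> dist x (e a) < 1 / (real q + 1)"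
    proof
      fix q
      have "e a \<in> closure X0" using dense by simp
      moreover have "(0::real) < 1 / (real q + 1)" by simp
      ultimately show "\<exists>x. x \<in> X0 \<and> dist x (e a) < 1 / (real q + 1)"
        unfolding closure_approachable by blast
    qed
    then show "\<exists>g. \<forall>q. g q \<in> X0 \<and> dist (g q) (e a) < 1 / (real q + 1)" by (rule choice)
  qed
  then have "\<exists>d. \<forall>a. \<forall>q. d a q \<in> X0 \<and> dist (d a q) (e a) < 1 / (real q + 1)" by (rule choice)
  then obtain d where d: "\<And>a q. d a q \<in> X0 \<and> dist (d a q) (e a) < 1 / (real q + 1)"
    by blast
  define y where "y l = d (fst (prod_decode (fst (prod_decode l)))) (snd (prod_decode (fst (prod_decode l))))" for l
  have yd: "\<exists>l\<ge>L. dist (y l) z < \<rho>" if \<rho>: "0 < \<rho>" for z \<rho> L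
  proof -
    have "z \<in> closure S0" using S0 by simp
    moreover have "0 < \<rho>/2" using \<rho> by simp
    ultimately obtain s where s: "s \<in> S0" "dist s z < \<rho>/2" unfolding closure_approachable by blast
    then obtain a where a: "s = e a" using rng by blast
    obtain q where q: "inverse (real (Suc q)) < \<rho>/2" using reals_Archimedean[of "\<rho>/2"] \<open>0 < \<rho>/2\<close> by blast
    define l where "l = prod_encode (prod_encode (a, q), L)"
    have yl: "y l = d a q" unfolding y_def l_def by simp
    have "dist (y l) z \<le> dist (d a q) (e a) + dist (e a) z" unfolding yl by (rule dist_triangle)
    moreover have "1 / (real q + 1) = inverse (real (Suc q))" by (simp add: inverse_eq_divide)
    moreover have "dist (d a q) (e a) < 1 / (real q + 1)" using d by blast
    moreover have "dist (e a) z < \<rho>/2" using s a by simp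
    ultimately have "dist (y l) z < \<rho>" using q by linarith
    moreover have "L \<le> l" unfolding l_def by (rule le_prod_encode_2)
    ultimately show ?thesis by (intro exI[of _ l]) simp
  qed
  have yX: "\<forall>l. y l \<in> X0" unfolding y_def using d by blast
  have "(\<forall>l. y l \<in> X0) \<and> (\<forall>z \<rho> L. 0 < \<rho> \<longrightarrow> (\<exists>l\<ge>L. dist (y l) z < \<rho>))"
    using yX yd by simp
  show ?thesis
    apply (rule exI[of _ y])
    using yX yd by simp
qed

lemma TB_exists:
  fixes A B :: "'a::real_normed_vector \<Rightarrow> 'a" and y :: "nat \<Rightarrow> 'a"
  assumes uA: "\<And>j. uncond_conv (\<lambda>k. (A ^^ k) (y j))"
    and uB: "\<And>j. uncond_conv (\<lambda>k. (B ^^ k) (y j))"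
  shows "\<exists>N::nat\<Rightarrow>nat. mono N \<and> (\<forall>l. l + 1 \<le> N l) \<and>
    (\<forall>l j F. j \<le> l \<longrightarrow> finite F \<longrightarrow> (\<forall>i\<in>F. N l \<le> i) \<longrightarrow>
       norm (\<Sum>i\<in>F. (B ^^ i) (y j)) \<le> (1/2)^l / real (l+1) \<and>
       norm (\<Sum>i\<in>F. (A ^^ i) (y j)) \<le> (1/2)^l / real (l+1))"
proof -
  define TP where "TP l N' \<longleftrightarrow> (\<forall>j F. j \<le> l \<longrightarrow> finite F \<longrightarrow> (\<forall>i\<in>F. N' \<le> i) \<longrightarrow>
       norm (\<Sum>i\<in>F. (B ^^ i) (y j)) \<le> (1/2::real)^l / real (l+1) \<and>
       norm (\<Sum>i\<in>F. (A ^^ i) (y j)) \<le> (1/2)^l / real (l+1))" for l N'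
  have "\<forall>l. \<exists>N0. \<forall>N'\<ge>N0. TP l N'"
  proof
    fix l
    have dpos: "0 < (1/2::real)^l / real (l+1)" by simp
    have "\<forall>j. \<exists>K. \<forall>F. finite F \<longrightarrow> (\<forall>i\<in>F. K < i) \<longrightarrow> norm (\<Sum>i\<in>F. (A ^^ i) (y j)) < (1/2::real)^l / real (l+1)"
      using unc_tail[OF uA dpos] by blast
    from choice[OF this] obtain KA where KA: "\<forall>j F. finite F \<longrightarrow> (\<forall>i\<in>F. KA j < i) \<longrightarrow> norm (\<Sum>i\<in>F. (A ^^ i) (y j)) < (1/2::real)^l / real (l+1)"
      by blast
    have "\<forall>j. \<exists>K. \<forall>F. finite F \<longrightarrow> (\<forall>i\<in>F. K < i) \<longrightarrow> norm (\<Sum>i\<in>F. (B ^^ i) (y j)) < (1/2::real)^l / real (l+1)"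
      using unc_tail[OF uB dpos] by blast
    from choice[OF this] obtain KB where KB: "\<forall>j F. finite F \<longrightarrow> (\<forall>i\<in>F. KB j < i) \<longrightarrow> norm (\<Sum>i\<in>F. (B ^^ i) (y j)) < (1/2::real)^l / real (l+1)"
      by blast
    show "\<exists>N0. \<forall>N'\<ge>N0. TP l N'"
    proof (intro exI[of _ "(\<Sum>j\<le>l. KA j + KB j) + 1"] allI impI)
      fix N' assume N': "(\<Sum>j\<le>l. KA j + KB j) + 1 \<le> N'"
      show "TP l N'" unfolding TP_def
      proof (intro allI impI)
        fix j F assume j: "j \<le> l" and F: "finite F" and Fi: "\<forall>i\<in>F. N' \<le> i"
        have "KA j + KB j \<le> (\<Sum>j\<le>l. KA j + KB j)" using j by (intro member_le_sum) auto
        then have "\<forall>i\<in>F. KA j < i" "\<forall>i\<in>F. KB j < i" using N' Fi by fastforce+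
        then show "norm (\<Sum>i\<in>F. (B ^^ i) (y j)) \<le> (1/2::real)^l / real (l+1) \<and>
           norm (\<Sum>i\<in>F. (A ^^ i) (y j)) \<le> (1/2)^l / real (l+1)"
          using KA KB F by (meson less_imp_le)
      qed
    qed
  qed
  from choice[OF this] obtain Nf where Nf: "\<forall>l. \<forall>N'\<ge>Nf l. TP l N'" by blast
  define N where "N l = (\<Sum>i\<le>l. Nf i) + l + 1" for l
  have "mono N"
  proof (rule monoI)
    fix l l' :: nat assume "l \<le> l'"
    then have "(\<Sum>i\<le>l. Nf i) \<le> (\<Sum>i\<le>l'. Nf i)" by (intro sum_mono2) auto
    then show "N l \<le> N l'" unfolding N_def using \<open>l \<le> l'\<close> by simp
  qed
  moreover have "\<forall>l. l + 1 \<le> N l" unfolding N_def by simp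
  moreover have "TP l (N l)" for l
  proof -
    have "Nf l \<le> (\<Sum>i\<le>l. Nf i)" by (intro member_le_sum) auto
    then have "Nf l \<le> N l" unfolding N_def by simp
    then show ?thesis using Nf by blast
  qed
  ultimately show ?thesis unfolding TP_def by blast
qed

theorem corollary2p4:
  fixes D :: "'a::banach set" and A :: "'a \<Rightarrow> 'a"
    and X0 :: "'a set" and B :: "'a \<Rightarrow> 'a"
  assumes "infinite_dim TYPE('a)"
    and "separable_space TYPE('a)"
    and "linear_operator_on D A"
    and "closure D = UNIV"
    and "\<And>r. r \<ge> 1 \<Longrightarrow> closed_operator (dom_pow D A r) (A ^^ r)"
    and "X0 \<subseteq> (\<Inter>n. dom_pow D A n)"
    and "closure X0 = UNIV"
    and "\<And>x. x \<in> X0 \<Longrightarrow> B x \<in> X0"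
    and "\<And>x. x \<in> X0 \<Longrightarrow> A (B x) = x"
    and "\<And>x. x \<in> X0 \<Longrightarrow> uncond_conv (\<lambda>n. (A ^^ n) x)"
    and "\<And>x. x \<in> X0 \<Longrightarrow> uncond_conv (\<lambda>n. (B ^^ n) x)"
    and "n \<ge> 1"
  shows "freq_hypercyclic (dom_pow D A n) (A ^^ n)"
proof -
  obtain y :: "nat \<Rightarrow> 'a" where yX0: "\<And>l. y l \<in> X0"
    and yd: "\<And>z \<rho> L. 0 < \<rho> \<Longrightarrow> \<exists>l\<ge>L. dist (y l) z < \<rho>"
    using dense_seq[OF assms(2) assms(7)] by blast
  obtain N :: "nat \<Rightarrow> nat" where Nmono: "mono N" and Nge: "\<forall>l. l + 1 \<le> N l"
    and TB: "\<forall>l j F. j \<le> l \<longrightarrow> finite F \<longrightarrow> (\<forall>i\<in>F. N l \<le> i) \<longrightarrow>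
       norm (\<Sum>i\<in>F. (B ^^ i) (y j)) \<le> (1/2)^l / real (l+1) \<and>
       norm (\<Sum>i\<in>F. (A ^^ i) (y j)) \<le> (1/2)^l / real (l+1)"
    using TB_exists[of A y B] assms(10,11) yX0 by blast
  interpret F: fhc D A B X0 n y N
  proof
    show "linear_operator_on D A" by (rule assms(3))
    show "\<And>r. 1 \<le> r \<Longrightarrow> closed_operator (dom_pow D A r) (A ^^ r)" by (rule assms(5))
    show "X0 \<subseteq> (\<Inter>n. dom_pow D A n)" by (rule assms(6))
    show "\<And>x. x \<in> X0 \<Longrightarrow> B x \<in> X0" by (rule assms(8))
    show "\<And>x. x \<in> X0 \<Longrightarrow> A (B x) = x" by (rule assms(9))
    show "1 \<le> n" by (rule assms(12))
    show "\<And>l. y l \<in> X0" by (rule yX0)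
    show "mono N" by (rule Nmono)
    show "\<And>l. l + 1 \<le> N l" using Nge by blast
    show "\<And>l j F. j \<le> l \<Longrightarrow> finite F \<Longrightarrow> \<forall>i\<in>F. N l \<le> i \<Longrightarrow>
       norm (\<Sum>i\<in>F. (B ^^ i) (y j)) \<le> (1/2)^l / real (l+1)" using TB by blast
    show "\<And>l j F. j \<le> l \<Longrightarrow> finite F \<Longrightarrow> \<forall>i\<in>F. N l \<le> i \<Longrightarrow>
       norm (\<Sum>i\<in>F. (A ^^ i) (y j)) \<le> (1/2)^l / real (l+1)" using TB by blast
  qed
  have n1: "1 \<le> n" by (rule assms(12))
  have pw: "(A ^^ n) ^^ m = A ^^ (n * m)" for m by (simp add: funpow_mult)
  have fdom: "F.f \<in> dom_pow D A r" for r
  proof -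
    have "F.f \<in> dom_pow D A (r + 1)" using F.f_dom[of "r + 1"] by simp
    then show ?thesis by (rule dp_mono[rotated]) simp
  qed
  show ?thesis unfolding freq_hypercyclic_def
  proof (intro bexI[of _ F.f] conjI allI impI)
    show "F.f \<in> dom_pow D A n" by (rule fdom)
  next
    fix m :: nat assume "1 \<le> m"
    show "((A ^^ n) ^^ m) F.f \<in> dom_pow D A n" unfolding dom_pow_def
    proof (intro CollectI allI impI)
      fix k assume "k < n"
      have "(A ^^ k) (((A ^^ n) ^^ m) F.f) = (A ^^ (k + n * m)) F.f"
        unfolding pw by (simp add: funpow_add)
      moreover have "F.f \<in> dom_pow D A (Suc (k + n * m))" by (rule fdom)
      ultimately show "(A ^^ k) (((A ^^ n) ^^ m) F.f) \<in> D" unfolding dom_pow_def by simp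
    qed
  next
    fix U :: "'a set" assume U: "open U \<and> U \<noteq> {}"
    then obtain z where z: "z \<in> U" by blast
    then obtain \<rho> where \<rho>: "0 < \<rho>" "ball z \<rho> \<subseteq> U" using U openE by metis
    obtain L where L: "(1/2::real)^L < \<rho>/8" using real_arch_pow_inv[of "\<rho>/8" "1/2"] \<rho>(1) by auto
    obtain l where l: "L \<le> l" "dist (y l) z < \<rho>/2" using yd[of "\<rho>/2" L z] \<rho>(1) by auto
    have sub: "Sset N l \<subseteq> {m. ((A ^^ n) ^^ m) F.f \<in> U}"
    proof
      fix m assume m: "m \<in> Sset N l"
      have "1 \<le> m" using m unfolding Sset_def by simp
      then have nm: "1 \<le> n * m" using n1 by simp
      have eq: "((A ^^ n) ^^ m) F.f = suminf (F.v (n * m))"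
        unfolding pw using F.f_dom[OF nm] by simp
      have "norm (suminf (F.v (n * m)) - y l) \<le> 4 * (1/2)^l" using F.est[OF m] .
      also have "\<dots> \<le> 4 * (1/2)^L" using l(1) by (intro mult_left_mono power_decreasing) auto
      finally have "dist (((A ^^ n) ^^ m) F.f) (y l) < \<rho>/2" using L unfolding eq dist_norm by linarith
      moreover have "dist z (((A ^^ n) ^^ m) F.f) \<le> dist z (y l) + dist (y l) (((A ^^ n) ^^ m) F.f)"
        by (rule dist_triangle)
      moreover have "dist z (y l) = dist (y l) z" "dist (y l) (((A ^^ n) ^^ m) F.f) = dist (((A ^^ n) ^^ m) F.f) (y l)"
        by (simp_all add: dist_commute)
      ultimately have "dist z (((A ^^ n) ^^ m) F.f) < \<rho>" using l(2) by linarith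
      then show "m \<in> {m. ((A ^^ n) ^^ m) F.f \<in> U}" using \<rho>(2) by auto
    qed
    have dpos: "0 < 1 / real (4 * Mq N l)" using Mq_pos[of N l] by simp
    have bnd: "1 / real (4 * Mq N l) * real x \<le> real (card ({m. ((A ^^ n) ^^ m) F.f \<in> U} \<inter> {1..x}))"
      if x: "8 * Mq N l \<le> x" for x
    proof -
      have "1 / real (4 * Mq N l) * real x = real x / (4 * Mq N l)" by simp
      also have "\<dots> \<le> card (Sset N l \<inter> {1..x})" using Sset_dens[OF x] by simp
      also have "\<dots> \<le> card ({m. ((A ^^ n) ^^ m) F.f \<in> U} \<inter> {1..x})"
      proof -
        have "Sset N l \<inter> {1..x} \<subseteq> {m. ((A ^^ n) ^^ m) F.f \<in> U} \<inter> {1..x}" using sub by blast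
        then have "card (Sset N l \<inter> {1..x}) \<le> card ({m. ((A ^^ n) ^^ m) F.f \<in> U} \<inter> {1..x})"
          by (intro card_mono) auto
        then show ?thesis by simp
      qed
      finally show ?thesis .
    qed
    show "lower_density {m. ((A ^^ n) ^^ m) F.f \<in> U} > 0"
      by (rule ld_pos[OF dpos bnd])
  qed
qed

end
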